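(* Let $\mathbf{C}$ be a covering of a finite nonempty set $U$ such that every $x\in U$ has a core block in $\mathbf{C}$. If $K\in\mathbf{C}$ is not a core block of any element of $U$, then $K$ is a reducible element of $\mathbf{C}$.
   Context: A covering of $U$ is a family (set) $\mathbf{C}$ of subsets of $U$ with $\emptyset\notin\mathbf{C}$ and $\bigcup\mathbf{C}=U$; its elements are called blocks. The membership repeat degree of $x\in U$ is $\partial(x)=|\{K\in\mathbf{C}: x\in K\}|$. The common block repeat degree of $(x,y)\in U\times U$ is $\lambda(x,y)=|\{K\in\mathbf{C}: \{x,y\}\subseteq K\}|$. A block $K\in\mathbf{C}$ is a core block of $x\in U$ if $x\in K$ and $\lambda(x,y)=\partial(x)$ for every $y\in K$. A block $K\in\mathbf{C}$ is a reducible element of $\mathbf{C}$ if $K$ is the union of some subfamily of $\mathbf{C}\setminus\{K\}$; otherwise it is irreducible. *)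

theory Defs
  imports Main
begin

definition covering :: "'a set \<Rightarrow> 'a set set \<Rightarrow> bool" where
  "covering U C \<longleftrightarrow> (\<forall>K\<in>C. K \<subseteq> U) \<and> {} \<notin> C \<and> \<Union>C = U"

definition mrd :: "'a set set \<Rightarrow> 'a \<Rightarrow> nat" where
  "mrd C x = card {K \<in> C. x \<in> K}"

definition cbrd :: "'a set set \<Rightarrow> 'a \<Rightarrow> 'a \<Rightarrow> nat" where
  "cbrd C x y = card {K \<in> C. {x, y} \<subseteq> K}"

definition core_block :: "'a set set \<Rightarrow> 'a set \<Rightarrow> 'a \<Rightarrow> bool" where
  "core_block C K x \<longleftrightarrow> K \<in> C \<and> x \<in> K \<and> (\<forall>y\<in>K. cbrd C x y = mrd C x)"

definition reducible :: "'a set set \<Rightarrow> 'a set \<Rightarrow> bool" where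
  "reducible C K \<longleftrightarrow> K \<in> C \<and> (\<exists>S \<subseteq> C - {K}. \<Union>S = K)"

end

theory Submission
  imports Defs
begin

lemma core_sub:
  assumes fC: "finite C" and cb: "core_block C B x" and K: "K \<in> C" "x \<in> K"
  shows "B \<subseteq> K"
proof
  fix y assume y: "y \<in> B"
  have eq: "card {K \<in> C. {x, y} \<subseteq> K} = card {K \<in> C. x \<in> K}"
    using cb y unfolding core_block_def cbrd_def mrd_def by auto
  have sub: "{K \<in> C. {x, y} \<subseteq> K} \<subseteq> {K \<in> C. x \<in> K}" by auto
  have "{K \<in> C. {x, y} \<subseteq> K} = {K \<in> C. x \<in> K}"
    using card_subset_eq[OF _ sub eq] fC by auto
  then show "y \<in> K" using K by blast
qed

theorem proposition18:
  fixes U :: "'a set" and C :: "'a set set" and K :: "'a set"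
  assumes "finite U" and "U \<noteq> {}"
    and "covering U C"
    and "\<forall>x\<in>U. \<exists>B. core_block C B x"
    and "K \<in> C"
    and "\<forall>x\<in>U. \<not> core_block C K x"
  shows "reducible C K"
proof -
  have CU: "C \<subseteq> Pow U" using assms(3) unfolding covering_def by auto
  have fC: "finite C" using finite_subset[OF CU] assms(1) by auto
  have KU: "K \<subseteq> U" using CU assms(5) by auto
  define f where "f x = (SOME B. core_block C B x)" for x
  have cf: "core_block C (f x) x" if "x \<in> K" for x
    using assms(4) KU that unfolding f_def by (meson someI_ex subsetD)
  let ?S = "f ` K"
  have "?S \<subseteq> C - {K}"
  proof
    fix B assume "B \<in> ?S"
    then obtain x where x: "x \<in> K" "B = f x" by auto
    have "B \<in> C" using cf[OF x(1)] x unfolding core_block_def by auto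
    moreover have "B \<noteq> K" using cf[OF x(1)] x assms(6) KU by auto
    ultimately show "B \<in> C - {K}" by auto
  qed
  moreover have "\<Union>?S = K"
  proof
    show "\<Union>?S \<subseteq> K" using core_sub[OF fC cf assms(5)] by auto
    show "K \<subseteq> \<Union>?S"
    proof
      fix x assume "x \<in> K"
      then have "x \<in> f x" using cf unfolding core_block_def by auto
      then show "x \<in> \<Union>?S" using \<open>x \<in> K\<close> by auto
    qed
  qed
  ultimately show ?thesis unfolding reducible_def using assms(5) by blast
qed

end
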